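(* Let $f$ be a Boolean function with $s={\rm psize}(f)\ge1$ that is equivalent to a depth-$d$ decision tree. Then the zero-depth of $T_f$ is at most $d\ln s+1$.
   Context: Every Boolean function has a unique representation as a sum over $\mathbb{F}_2$ of distinct monomials; ${\rm psize}(f)$ is the number of non-constant monomials in it. A decision tree computes a Boolean function by following from the root, at an internal node labeled $x_i$, the 0-child (left) if $x_i=0$ and the 1-child (right) if $x_i=1$, outputting the 0/1 leaf label; its depth is the maximum number of edges on a root-to-leaf path. For a Boolean function $f$, the decision tree $T_f$ is defined recursively: if $f$ is constant $\xi$, $T_f$ is a leaf labeled $\xi$; otherwise the root is labeled by $x_i$ where $i$ is the smallest index among those minimizing ${\rm psize}(f_{|x_i\gets0})$, its left subtree is $T_{f_{|x_i\gets0}}$ and its right subtree is $T_{f_{|x_i\gets1}}$. The zero-depth of a decision tree is the maximum, over root-to-leaf paths, of the number of edges on the path that go to a left (0-) child. *)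

theory Defs
  imports Complex_Main
begin

text \<open>A Boolean function on the variables x_0, ..., x_(n-1) is modelled as
  f :: nat set => bool, where an input point is the set of indices of variables
  that are 1; only inputs x with x \<subseteq> {..<n} matter.\<close>

type_synonym bfun = "nat set \<Rightarrow> bool"

definition anf :: "nat \<Rightarrow> bfun \<Rightarrow> nat set set" where
  "anf n f = (THE M. M \<subseteq> Pow {..<n} \<and>
      (\<forall>x. x \<subseteq> {..<n} \<longrightarrow> (f x \<longleftrightarrow> odd (card {S \<in> M. S \<subseteq> x}))))"

definition psize :: "nat \<Rightarrow> bfun \<Rightarrow> nat" where
  "psize n f = card (anf n f - {{}})"

definition restr :: "nat \<Rightarrow> bool \<Rightarrow> bfun \<Rightarrow> bfun" where
  "restr i b f = (\<lambda>x. f (if b then insert i x else x - {i}))"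

definition is_const :: "nat \<Rightarrow> bfun \<Rightarrow> bool" where
  "is_const n f \<longleftrightarrow> (\<forall>x y. x \<subseteq> {..<n} \<longrightarrow> y \<subseteq> {..<n} \<longrightarrow> f x = f y)"

datatype dtree = Leaf bool | Node nat dtree dtree

fun evalT :: "dtree \<Rightarrow> nat set \<Rightarrow> bool" where
  "evalT (Leaf b) x = b"
| "evalT (Node i l r) x = (if i \<in> x then evalT r x else evalT l x)"

fun depth :: "dtree \<Rightarrow> nat" where
  "depth (Leaf b) = 0"
| "depth (Node i l r) = Suc (max (depth l) (depth r))"

fun zero_depth :: "dtree \<Rightarrow> nat" where
  "zero_depth (Leaf b) = 0"
| "zero_depth (Node i l r) = max (Suc (zero_depth l)) (zero_depth r)"

definition split_var :: "nat \<Rightarrow> bfun \<Rightarrow> nat" where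
  "split_var n f = (LEAST i. i < n \<and>
      (\<forall>j<n. psize n (restr i False f) \<le> psize n (restr j False f)))"

text \<open>Construction of T_f with a fuel parameter k; since every split variable is
  relevant and becomes irrelevant afterwards, fuel n always suffices, so the
  fallback leaf in case 0 is never reached for non-constant f.\<close>
fun Tf_aux :: "nat \<Rightarrow> nat \<Rightarrow> bfun \<Rightarrow> dtree" where
  "Tf_aux n 0 f = Leaf (f {})"
| "Tf_aux n (Suc k) f =
     (if is_const n f then Leaf (f {})
      else (let i = split_var n f in
            Node i (Tf_aux n k (restr i False f)) (Tf_aux n k (restr i True f))))"

definition Tf :: "nat \<Rightarrow> bfun \<Rightarrow> dtree" where
  "Tf n f = Tf_aux n n f"

end

theory Submission imports Defs begin

definition rep :: "nat \<Rightarrow> nat set set \<Rightarrow> bfun \<Rightarrow> bool" where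
  "rep n M g \<longleftrightarrow> M \<subseteq> Pow {..<n} \<and>
      (\<forall>x. x \<subseteq> {..<n} \<longrightarrow> (g x \<longleftrightarrow> odd (card {S \<in> M. S \<subseteq> x})))"

lemma parity_symdiff:
  assumes "finite A" "finite B"
  shows "odd (card ((A - B) \<union> (B - A))) \<longleftrightarrow> (odd (card A) \<noteq> odd (card B))"
proof -
  have a: "card A = card (A - B) + card (A \<inter> B)"
  proof -
    have "A = (A - B) \<union> (A \<inter> B)" by auto
    hence "card A = card ((A - B) \<union> (A \<inter> B))" by simp
    also have "\<dots> = card (A - B) + card (A \<inter> B)" using assms by (intro card_Un_disjoint) auto
    finally show ?thesis .
  qed
  have b: "card B = card (B - A) + card (A \<inter> B)"
  proof -
    have "B = (B - A) \<union> (A \<inter> B)" by auto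
    hence "card B = card ((B - A) \<union> (A \<inter> B))" by simp
    also have "\<dots> = card (B - A) + card (A \<inter> B)" using assms by (intro card_Un_disjoint) auto
    finally show ?thesis .
  qed
  have c: "card ((A - B) \<union> (B - A)) = card (A - B) + card (B - A)"
    using assms by (intro card_Un_disjoint) auto
  show ?thesis using a b c by auto
qed

lemma rep_unique:
  assumes "rep n M1 g" "rep n M2 g" shows "M1 = M2"
proof (rule ccontr)
  assume ne: "M1 \<noteq> M2"
  define D where "D = (M1 - M2) \<union> (M2 - M1)"
  have fin1: "finite M1" "finite M2" using assms unfolding rep_def
    by (meson finite_Pow_iff finite_lessThan finite_subset)+
  have "D \<noteq> {}" using ne unfolding D_def by auto
  moreover have "finite D" using fin1 unfolding D_def by auto
  ultimately obtain S where S: "S \<in> D" "\<forall>b\<in>D. b \<le> S \<longrightarrow> S = b"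
    using finite_has_minimal by blast
  have SN: "S \<subseteq> {..<n}" using S(1) assms unfolding D_def rep_def by auto
  have eq: "{T \<in> D. T \<subseteq> S} = {S}" using S by auto
  have "{T \<in> D. T \<subseteq> S} = ({T \<in> M1. T \<subseteq> S} - {T \<in> M2. T \<subseteq> S}) \<union> ({T \<in> M2. T \<subseteq> S} - {T \<in> M1. T \<subseteq> S})"
    unfolding D_def by auto
  hence "odd (card {T \<in> D. T \<subseteq> S}) \<longleftrightarrow> (odd (card {T \<in> M1. T \<subseteq> S}) \<noteq> odd (card {T \<in> M2. T \<subseteq> S}))"
    using parity_symdiff[of "{T \<in> M1. T \<subseteq> S}" "{T \<in> M2. T \<subseteq> S}"] fin1 by auto
  moreover have "odd (card {T \<in> M1. T \<subseteq> S}) = odd (card {T \<in> M2. T \<subseteq> S})"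
    using assms SN unfolding rep_def by blast
  ultimately show False using eq by simp
qed

lemma rep_exists: "\<exists>M. rep n M g"
proof -
  define N where "N = {..<n::nat}"
  define \<Phi> where "\<Phi> M = {x \<in> Pow N. odd (card {S \<in> M. S \<subseteq> x})}" for M :: "nat set set"
  have im: "\<Phi> ` Pow (Pow N) \<subseteq> Pow (Pow N)" unfolding \<Phi>_def by auto
  have inj: "inj_on \<Phi> (Pow (Pow N))"
  proof (rule inj_onI)
    fix M1 M2 assume m: "M1 \<in> Pow (Pow N)" "M2 \<in> Pow (Pow N)" "\<Phi> M1 = \<Phi> M2"
    have gen: "rep n M (\<lambda>x. x \<in> \<Phi> M)" if "M \<in> Pow (Pow N)" for M
      using that unfolding rep_def \<Phi>_def N_def by auto
    have "rep n M1 (\<lambda>x. x \<in> \<Phi> M1)" using gen m(1) .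
    moreover have "rep n M2 (\<lambda>x. x \<in> \<Phi> M1)" using gen[OF m(2)] by (simp only: m(3))
    ultimately show "M1 = M2" by (rule rep_unique)
  qed
  have fin: "finite (Pow (Pow N))" unfolding N_def by simp
  have eqP: "\<Phi> ` Pow (Pow N) = Pow (Pow N)"
    by (rule endo_inj_surj[OF fin im inj])
  have "{x \<in> Pow N. g x} \<in> Pow (Pow N)" by blast
  hence "{x \<in> Pow N. g x} \<in> \<Phi> ` Pow (Pow N)" by (simp only: eqP)
  then obtain M where M: "M \<in> Pow (Pow N)" "{x \<in> Pow N. g x} = \<Phi> M" by (rule imageE)
  have "rep n M g" unfolding rep_def
  proof (intro conjI allI impI)
    show "M \<subseteq> Pow {..<n}" using M N_def by auto
    fix x assume "x \<subseteq> {..<n}"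
    hence "x \<in> Pow N" using N_def by auto
    hence "x \<in> \<Phi> M \<longleftrightarrow> g x" using M(2) by blast
    thus "g x = odd (card {S \<in> M. S \<subseteq> x})" using \<open>x \<in> Pow N\<close> unfolding \<Phi>_def by blast
  qed
  thus ?thesis by blast
qed

lemma anf_rep: "rep n (anf n g) g"
proof -
  have "\<exists>!M. rep n M g" using rep_exists rep_unique by blast
  thus ?thesis unfolding anf_def rep_def[symmetric] by (rule theI')
qed

lemma anf_eq: "rep n M g \<Longrightarrow> anf n g = M"
  using anf_rep rep_unique by blast

lemma finite_anf: "finite (anf n g)"
  using anf_rep unfolding rep_def by (meson finite_Pow_iff finite_lessThan finite_subset)

lemma rep_restrV:
  assumes "rep n M g"
  shows "rep n {S \<in> M. S \<inter> V = {}} (\<lambda>x. g (x - V))"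
  unfolding rep_def
proof (intro conjI allI impI)
  show "{S \<in> M. S \<inter> V = {}} \<subseteq> Pow {..<n}" using assms unfolding rep_def by auto
  fix x assume x: "x \<subseteq> {..<n}"
  have "{S \<in> M. S \<subseteq> x - V} = {S \<in> {S \<in> M. S \<inter> V = {}}. S \<subseteq> x}" by auto
  moreover have "x - V \<subseteq> {..<n}" using x by auto
  ultimately show "g (x - V) = odd (card {S \<in> {S \<in> M. S \<inter> V = {}}. S \<subseteq> x})"
    using assms unfolding rep_def by metis
qed

lemma rep_restr1:
  assumes "rep n M g" "i < n"
  shows "rep n {T \<in> Pow {..<n}. i \<notin> T \<and> ((T \<in> M) \<noteq> (insert i T \<in> M))} (restr i True g)"
  unfolding rep_def
proof (intro conjI allI impI)
  show "{T \<in> Pow {..<n}. i \<notin> T \<and> ((T \<in> M) \<noteq> (insert i T \<in> M))} \<subseteq> Pow {..<n}" by auto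
  fix x assume x: "x \<subseteq> {..<n}"
  have finM: "finite M" using assms unfolding rep_def by (meson finite_Pow_iff finite_lessThan finite_subset)
  define P where "P = {T \<in> M. i \<notin> T \<and> T \<subseteq> x}"
  define Q where "Q = {T. i \<notin> T \<and> T \<subseteq> x \<and> insert i T \<in> M}"
  define A where "A = {S \<in> M. S \<subseteq> insert i x}"
  have finQ: "finite Q"
  proof -
    have "Q \<subseteq> Pow x" unfolding Q_def by auto
    moreover have "finite x" using x by (rule finite_subset) simp
    ultimately show ?thesis by (meson finite_Pow_iff finite_subset)
  qed
  have finP: "finite P" unfolding P_def using finM by auto
  have AU: "A = P \<union> insert i ` Q"
  proof
    show "A \<subseteq> P \<union> insert i ` Q"
    proof
      fix S assume S: "S \<in> A"
      show "S \<in> P \<union> insert i ` Q"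
      proof (cases "i \<in> S")
        case True
        hence "S = insert i (S - {i})" by auto
        moreover have "S - {i} \<in> Q" using S True unfolding A_def Q_def by (auto simp: insert_absorb)
        ultimately have "S \<in> insert i ` Q" by (rule rev_image_eqI[rotated])
        thus ?thesis by (rule UnI2)
      next
        case False thus ?thesis using S unfolding A_def P_def by auto
      qed
    qed
    show "P \<union> insert i ` Q \<subseteq> A" unfolding A_def P_def Q_def by auto
  qed
  have "card A = card P + card (insert i ` Q)"
    unfolding AU using finP finQ by (intro card_Un_disjoint) (auto simp: P_def)
  also have "card (insert i ` Q) = card Q"
  proof (rule card_image, rule inj_onI)
    fix a b assume ab: "a \<in> Q" "b \<in> Q" and e: "insert i a = insert i b"
    have "i \<notin> a" using ab(1) unfolding Q_def by blast
    moreover have "i \<notin> b" using ab(2) unfolding Q_def by blast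
    ultimately have h: "insert i a - {i} = a" "insert i b - {i} = b" by simp_all
    have "a = insert i a - {i}" using h(1) by (rule sym)
    also have "\<dots> = insert i b - {i}" using e by (rule arg_cong)
    also have "\<dots> = b" by (rule h(2))
    finally show "a = b" .
  qed
  finally have cA: "card A = card P + card Q" .
  have "{T \<in> {T \<in> Pow {..<n}. i \<notin> T \<and> ((T \<in> M) \<noteq> (insert i T \<in> M))}. T \<subseteq> x} = (P - Q) \<union> (Q - P)"
    unfolding P_def Q_def using x by auto
  hence "odd (card {T \<in> {T \<in> Pow {..<n}. i \<notin> T \<and> ((T \<in> M) \<noteq> (insert i T \<in> M))}. T \<subseteq> x})
       \<longleftrightarrow> odd (card A)"
    using parity_symdiff[OF finP finQ] cA by simp
  moreover have "restr i True g x = odd (card A)"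
  proof -
    have "insert i x \<subseteq> {..<n}" using x assms(2) by simp
    hence "g (insert i x) = odd (card A)" using assms(1) unfolding rep_def A_def by blast
    thus ?thesis unfolding restr_def by simp
  qed
  ultimately show "restr i True g x = odd (card {T \<in> {T \<in> Pow {..<n}. i \<notin> T \<and> ((T \<in> M) \<noteq> (insert i T \<in> M))}. T \<subseteq> x})"
    by simp
qed

lemma psize_restr1:
  assumes "i < n" shows "psize n (restr i True g) \<le> psize n g"
proof -
  let ?M = "anf n g"
  let ?M1 = "{T \<in> Pow {..<n}. i \<notin> T \<and> ((T \<in> ?M) \<noteq> (insert i T \<in> ?M))}"
  have eq: "anf n (restr i True g) = ?M1" using anf_eq rep_restr1[OF anf_rep assms] by blast
  have sub: "?M1 - {{}} \<subseteq> (\<lambda>S. S - {i}) ` (?M - {{}})"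
  proof
    fix T assume T: "T \<in> ?M1 - {{}}"
    show "T \<in> (\<lambda>S. S - {i}) ` (?M - {{}})"
    proof (cases "T \<in> ?M")
      case True
      have "i \<notin> T" "T \<noteq> {}" using T by auto
      hence "T = T - {i}" by simp
      moreover have "T \<in> ?M - {{}}" using True \<open>T \<noteq> {}\<close> by simp
      ultimately show ?thesis by (rule rev_image_eqI[rotated])
    next
      case False
      have "i \<notin> T" "insert i T \<in> ?M" using T False by auto
      hence "T = insert i T - {i}" by simp
      moreover have "insert i T \<in> ?M - {{}}" using \<open>insert i T \<in> ?M\<close> by simp
      ultimately show ?thesis by (rule rev_image_eqI[rotated])
    qed
  qed
  have "card (?M1 - {{}}) \<le> card ((\<lambda>S. S - {i}) ` (?M - {{}}))"
    by (rule card_mono[OF finite_imageI[OF finite_Diff[OF finite_anf]] sub])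
  also have "\<dots> \<le> card (?M - {{}})" by (rule card_image_le[OF finite_Diff[OF finite_anf]])
  finally show ?thesis unfolding psize_def eq .
qed

lemma nonconst_psize:
  assumes "\<not> is_const n g" shows "psize n g \<ge> 1"
proof (rule ccontr)
  assume "\<not> psize n g \<ge> 1"
  hence "card (anf n g - {{}}) = 0" unfolding psize_def by simp
  moreover have "finite (anf n g - {{}})" using finite_anf by simp
  ultimately have "anf n g - {{}} = {}" by simp
  hence sub: "anf n g \<subseteq> {{}}" by auto
  have R: "\<forall>x. x \<subseteq> {..<n} \<longrightarrow> (g x \<longleftrightarrow> odd (card {S \<in> anf n g. S \<subseteq> x}))"
    using anf_rep unfolding rep_def by blast
  have "\<forall>x. x \<subseteq> {..<n} \<longrightarrow> g x = odd (card (anf n g))"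
  proof (intro allI impI)
    fix x assume x: "x \<subseteq> {..<n}"
    have "{S \<in> anf n g. S \<subseteq> x} = anf n g" using sub by auto
    thus "g x = odd (card (anf n g))" using R x by simp
  qed
  hence "is_const n g" unfolding is_const_def by simp
  thus False using assms by simp
qed


fun zp :: "dtree \<Rightarrow> nat set" where
  "zp (Leaf b) = {}"
| "zp (Node i l r) = insert i (zp l)"

lemma zp_eval: "x \<inter> zp T = {} \<Longrightarrow> evalT T x = evalT T {}"
  by (induction T) auto

lemma zp_fin: "finite (zp T)"
  by (induction T) auto

lemma zp_card: "card (zp T) \<le> depth T"
proof (induction T)
  case (Leaf b) thus ?case by simp
next
  case (Node i l r)
  have "card (insert i (zp l)) \<le> Suc (card (zp l))" by (rule card_insert_le_m1) simp_all
  thus ?case using Node by simp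
qed

fun subT :: "nat \<Rightarrow> bool \<Rightarrow> dtree \<Rightarrow> dtree" where
  "subT i b (Leaf c) = Leaf c"
| "subT i b (Node j l r) = (if j = i then (if b then subT i b r else subT i b l)
                            else Node j (subT i b l) (subT i b r))"

lemma subT_eval: "evalT (subT i b T) x = evalT T (if b then insert i x else x - {i})"
  by (induction T) auto

lemma subT_depth: "depth (subT i b T) \<le> depth T"
  by (induction T) auto

lemma tree_restr:
  assumes "depth T \<le> d" "\<forall>x. x \<subseteq> {..<n} \<longrightarrow> evalT T x = g x" "i < n"
  shows "\<exists>T'. depth T' \<le> d \<and> (\<forall>x. x \<subseteq> {..<n} \<longrightarrow> evalT T' x = restr i b g x)"
proof (intro exI conjI allI impI)
  show "depth (subT i b T) \<le> d" using subT_depth assms(1) order_trans by blast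
  fix x assume x: "x \<subseteq> {..<n}"
  have "(if b then insert i x else x - {i}) \<subseteq> {..<n}" using x assms(3) by auto
  thus "evalT (subT i b T) x = restr i b g x"
    unfolding subT_eval restr_def using assms(2) by simp
qed

lemma psize_restr0:
  "psize n (restr i False g) + card {S \<in> anf n g - {{}}. i \<in> S} = psize n g"
proof -
  have r: "restr i False g = (\<lambda>x. g (x - {i}))" unfolding restr_def by simp
  have "anf n (restr i False g) = {S \<in> anf n g. S \<inter> {i} = {}}"
    unfolding r by (rule anf_eq, rule rep_restrV, rule anf_rep)
  hence e: "anf n (restr i False g) - {{}} = {S \<in> anf n g - {{}}. i \<notin> S}" by auto
  have fin: "finite (anf n g - {{}})" using finite_anf by simp
  have "anf n g - {{}} = {S \<in> anf n g - {{}}. i \<notin> S} \<union> {S \<in> anf n g - {{}}. i \<in> S}" by auto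
  hence "card (anf n g - {{}}) = card {S \<in> anf n g - {{}}. i \<notin> S} + card {S \<in> anf n g - {{}}. i \<in> S}"
    using fin by (metis (no_types, lifting) card_Un_disjoint disjoint_iff finite_Un mem_Collect_eq)
  thus ?thesis unfolding psize_def e by simp
qed

lemma hit:
  assumes "depth T \<le> d" "\<forall>x. x \<subseteq> {..<n} \<longrightarrow> evalT T x = g x" "\<not> is_const n g"
  shows "\<exists>i<n. psize n g \<le> d * card {S \<in> anf n g - {{}}. i \<in> S}"
proof (rule ccontr)
  assume neg: "\<not> ?thesis"
  define M where "M = anf n g"
  define M' where "M' = M - {{}}"
  define V where "V = zp T \<inter> {..<n}"
  define c where "c i = card {S \<in> M'. i \<in> S}" for i
  have p1: "psize n g \<ge> 1" using nonconst_psize assms(3) by blast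
  have pM: "psize n g = card M'" unfolding psize_def M'_def M_def ..
  have less: "d * c i < card M'" if "i \<in> V" for i
    using neg that unfolding V_def c_def M'_def M_def pM by auto
  have h: "rep n {S \<in> M. S \<inter> V = {}} (\<lambda>x. g (x - V))"
    unfolding M_def by (rule rep_restrV, rule anf_rep)
  have cst: "g (x - V) = g {}" if x: "x \<subseteq> {..<n}" for x
  proof -
    have x1: "x - V \<subseteq> {..<n}" using x by auto
    have "(x - V) \<inter> zp T = {}" using x unfolding V_def by auto
    hence "evalT T (x - V) = evalT T {}" by (rule zp_eval)
    moreover have "evalT T {} = g {}" using assms(2) by simp
    ultimately show ?thesis using assms(2) x1 by simp
  qed
  have e1: "{S::nat set. S = {} \<and> S \<subseteq> x} = {{}}" for x by auto
  have h2: "rep n (if g {} then {{}} else {}) (\<lambda>x. g (x - V))"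
    unfolding rep_def using cst by (auto simp: e1)
  have "{S \<in> M. S \<inter> V = {}} = (if g {} then {{}} else {})" using rep_unique[OF h h2] .
  hence hitall: "S \<inter> V \<noteq> {}" if "S \<in> M'" for S
    using that unfolding M'_def by (auto split: if_splits)
  have finV: "finite V" unfolding V_def by simp
  have cardV: "card V \<le> d"
  proof -
    have "card V \<le> card (zp T)" unfolding V_def by (rule card_mono[OF zp_fin]) auto
    thus ?thesis using zp_card[of T] assms(1) by linarith
  qed
  have sub: "M' \<subseteq> (\<Union>i\<in>V. {S \<in> M'. i \<in> S})" using hitall by blast
  have finM': "finite M'" unfolding M'_def M_def using finite_anf by simp
  have "card M' \<le> card (\<Union>i\<in>V. {S \<in> M'. i \<in> S})"
    by (rule card_mono[OF _ sub]) (use finV finM' in auto)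
  also have "\<dots> \<le> (\<Sum>i\<in>V. c i)" unfolding c_def by (rule card_UN_le[OF finV])
  finally have le1: "card M' \<le> (\<Sum>i\<in>V. c i)" .
  have Vne: "V \<noteq> {}" using le1 p1 pM by auto
  have "d * card M' \<le> d * (\<Sum>i\<in>V. c i)" using le1 by simp
  also have "\<dots> = (\<Sum>i\<in>V. d * c i)" by (simp add: sum_distrib_left)
  also have "\<dots> < (\<Sum>i\<in>V. card M')" by (rule sum_strict_mono[OF finV Vne less])
  also have "\<dots> = card V * card M'" by simp
  also have "\<dots> \<le> d * card M'" using cardV by simp
  finally show False by simp
qed

lemma split_var_prop:
  assumes "n > 0"
  shows "split_var n f < n \<and> (\<forall>j<n. psize n (restr (split_var n f) False f) \<le> psize n (restr j False f))"
proof -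
  obtain i where "i < n \<and> (\<forall>y. y < n \<longrightarrow> psize n (restr i False f) \<le> psize n (restr y False f))"
    using ex_has_least_nat[of "\<lambda>i. i < n" 0 "\<lambda>i. psize n (restr i False f)"] assms by blast
  hence "\<exists>i. i < n \<and> (\<forall>j<n. psize n (restr i False f) \<le> psize n (restr j False f))" by blast
  thus ?thesis unfolding split_var_def by (rule LeastI_ex)
qed

definition Bf :: "nat \<Rightarrow> nat \<Rightarrow> real" where
  "Bf d p = (if p = 0 then 0 else real d * ln (real p) + 1)"

lemma Bf_nonneg: "0 \<le> Bf d p"
  unfolding Bf_def by auto

lemma Bf_mono: assumes "p1 \<le> p" shows "Bf d p1 \<le> Bf d p"
proof (cases "p1 = 0")
  case True thus ?thesis using Bf_nonneg by (simp add: Bf_def)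
next
  case False
  hence "ln (real p1) \<le> ln (real p)" using assms by simp
  hence "real d * ln (real p1) \<le> real d * ln (real p)" by (simp add: mult_left_mono)
  thus ?thesis using False assms unfolding Bf_def by simp
qed

lemma Bf_step:
  assumes "p \<ge> 1" "d \<ge> 1" "d * p0 \<le> (d - 1) * p"
  shows "Bf d p0 + 1 \<le> Bf d p"
proof (cases "p0 = 0")
  case True thus ?thesis using assms unfolding Bf_def by simp
next
  case False
  have r1: "real (d * p0) \<le> real ((d - 1) * p)" using assms(3) by (simp only: of_nat_le_iff)
  have r2: "real (d - 1) = real d - 1" using assms(2) by simp
  have rd: "real d * real p0 \<le> (real d - 1) * real p"
    using r1 unfolding of_nat_mult r2 .
  have pp: "real p > 0" "real p0 > 0" "real d > 0" using assms False by auto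
  have q: "real p0 / real p \<le> 1 - 1 / real d"
    using rd pp by (simp add: field_simps)
  have "ln (real p0 / real p) \<le> real p0 / real p - 1" by (rule ln_le_minus_one) (use pp in simp)
  hence "ln (real p0) - ln (real p) \<le> - 1 / real d" using q pp by (simp add: ln_div)
  hence "real d * (ln (real p0) - ln (real p)) \<le> real d * (- 1 / real d)"
    using pp by (intro mult_left_mono) auto
  hence "real d * ln (real p0) + 1 \<le> real d * ln (real p)" using pp by (simp add: algebra_simps)
  thus ?thesis using False assms unfolding Bf_def by simp
qed

lemma main_ind:
  "\<forall>g. (\<exists>T. depth T \<le> d \<and> (\<forall>x. x \<subseteq> {..<n} \<longrightarrow> evalT T x = g x)) \<longrightarrow>
       real (zero_depth (Tf_aux n k g)) \<le> Bf d (psize n g)"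
proof (induction k)
  case 0 thus ?case using Bf_nonneg by simp
next
  case (Suc k)
  show ?case
  proof (intro allI impI)
    fix g assume "\<exists>T. depth T \<le> d \<and> (\<forall>x. x \<subseteq> {..<n} \<longrightarrow> evalT T x = g x)"
    then obtain T where T: "depth T \<le> d" "\<forall>x. x \<subseteq> {..<n} \<longrightarrow> evalT T x = g x" by blast
    show "real (zero_depth (Tf_aux n (Suc k) g)) \<le> Bf d (psize n g)"
    proof (cases "is_const n g")
      case True thus ?thesis using Bf_nonneg by simp
    next
      case nc: False
      have n0: "n > 0"
      proof (rule ccontr)
        assume "\<not> n > 0"
        hence "is_const n g" unfolding is_const_def by simp
        thus False using nc by simp
      qed
      define j where "j = split_var n g"
      have j: "j < n" "\<forall>i<n. psize n (restr j False g) \<le> psize n (restr i False g)"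
        using split_var_prop[OF n0, of g] unfolding j_def by auto
      obtain i where i: "i < n" "psize n g \<le> d * card {S \<in> anf n g - {{}}. i \<in> S}"
        using hit[OF T nc] by blast
      define ci where "ci = card {S \<in> anf n g - {{}}. i \<in> S}"
      define p where "p = psize n g"
      define p0 where "p0 = psize n (restr j False g)"
      define p1 where "p1 = psize n (restr j True g)"
      have p1p: "p1 \<le> p" unfolding p1_def p_def by (rule psize_restr1[OF j(1)])
      have pge: "p \<ge> 1" unfolding p_def using nonconst_psize nc by blast
      have pci: "p \<le> d * ci" using i(2) unfolding p_def ci_def .
      have dge: "d \<ge> 1" using pge pci by (cases d) auto
      have eq0: "psize n (restr i False g) + ci = p"
        unfolding ci_def p_def by (rule psize_restr0)
      have p0le: "p0 \<le> psize n (restr i False g)" unfolding p0_def using j(2) i(1) by blast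
      have "d * p0 + d * ci \<le> d * p"
      proof -
        have "d * p0 \<le> d * psize n (restr i False g)" using p0le by simp
        hence "d * p0 + d * ci \<le> d * (psize n (restr i False g) + ci)" by (simp add: algebra_simps)
        thus ?thesis using eq0 by simp
      qed
      hence dp0: "d * p0 \<le> (d - 1) * p" using pci by (simp add: diff_mult_distrib)
      have st: "Bf d p0 + 1 \<le> Bf d p" by (rule Bf_step[OF pge dge dp0])
      have tl: "\<exists>T. depth T \<le> d \<and> (\<forall>x. x \<subseteq> {..<n} \<longrightarrow> evalT T x = restr j False g x)"
        by (rule tree_restr[OF T j(1)])
      have tr: "\<exists>T. depth T \<le> d \<and> (\<forall>x. x \<subseteq> {..<n} \<longrightarrow> evalT T x = restr j True g x)"
        by (rule tree_restr[OF T j(1)])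
      have IHl: "real (zero_depth (Tf_aux n k (restr j False g))) \<le> Bf d p0"
        using Suc.IH tl unfolding p0_def by blast
      have IHr: "real (zero_depth (Tf_aux n k (restr j True g))) \<le> Bf d p1"
        using Suc.IH tr unfolding p1_def by blast
      have "Tf_aux n (Suc k) g = Node j (Tf_aux n k (restr j False g)) (Tf_aux n k (restr j True g))"
        using nc unfolding j_def by (simp add: Let_def)
      hence "zero_depth (Tf_aux n (Suc k) g) =
             max (Suc (zero_depth (Tf_aux n k (restr j False g)))) (zero_depth (Tf_aux n k (restr j True g)))"
        by simp
      moreover have "real (Suc (zero_depth (Tf_aux n k (restr j False g)))) \<le> Bf d p"
        using IHl st by simp
      moreover have "real (zero_depth (Tf_aux n k (restr j True g))) \<le> Bf d p"
        using IHr Bf_mono[OF p1p, of d] by simp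
      ultimately show ?thesis unfolding p_def by simp
    qed
  qed
qed

theorem mainTheorem20:
  fixes n d :: nat and f :: "nat set \<Rightarrow> bool" and T :: dtree
  assumes "psize n f \<ge> 1"
    and "depth T = d"
    and "\<forall>x. x \<subseteq> {..<n} \<longrightarrow> evalT T x = f x"
  shows "real (zero_depth (Tf n f)) \<le> real d * ln (real (psize n f)) + 1"
proof -
  have "\<exists>T. depth T \<le> d \<and> (\<forall>x. x \<subseteq> {..<n} \<longrightarrow> evalT T x = f x)"
    using assms(2,3) by auto
  hence "real (zero_depth (Tf_aux n n f)) \<le> Bf d (psize n f)" using main_ind by blast
  thus ?thesis using assms(1) unfolding Tf_def Bf_def by simp
qed

end
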